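(* Let $(a_n)_{n\ge 0}$ be an automatic sequence taking values in a finite alphabet $\mathcal{A}$. Then $(a_n)_{n\ge0}$ is also non-uniformly morphic. Furthermore, if $(a_n)_{n\ge 0}$ is the iterative fixed point of a uniform morphism of $\mathcal{A}^*$, then there exist an alphabet $\mathcal{B}$ of cardinality $2+\#\mathcal{A}$ and a sequence $(a'_n)_{n\ge0}$ with values in $\mathcal{B}$ such that $(a'_n)_{n\ge0}$ is the iterative fixed point of some non-uniform morphism of $\mathcal{B}^*$ and $(a_n)_{n\ge0}$ is the image of $(a'_n)_{n\ge0}$ under a $1$-uniform morphism (i.e. a letter-to-letter map applied pointwise).
   Context: For a finite alphabet $\mathcal{A}$, $\mathcal{A}^*$ is the free monoid of finite words under concatenation; a morphism $\sigma$ from $\mathcal{A}^*$ to $\mathcal{B}^*$ satisfies $\sigma(uv)=\sigma(u)\sigma(v)$ and is extended to infinite sequences letterwise. A morphism is $k$-uniform if every letter is mapped to a word of length exactly $k$; it is non-uniform if it is not $k$-uniform for any $k$. A sequence $(b_n)_{n\ge0}$ over $\mathcal{A}$ is pure morphic (the iterative fixed point of a morphism $\sigma$ of $\mathcal{A}^*$) if $\sigma(b_0)=b_0x$ for some word $x$ with $\sigma^\ell(x)$ nonempty for every $\ell$, and the words $\sigma^\ell(b_0)$ converge to $(b_n)$ (the length of their common prefix with $(b_n)$ tends to infinity). A sequence is $k$-automatic if it is the image under a $1$-uniform morphism of the iterative fixed point of a $k$-uniform morphism, and automatic if it is $k$-automatic for some $k\ge2$. A sequence is non-uniformly pure morphic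 if it is the iterative fixed point of a non-uniform morphism, and non-uniformly morphic if it is the image under a $1$-uniform morphism of a non-uniformly pure morphic sequence; here it is assumed that the alphabet of the non-uniform morphism coincides with the set of letters actually occurring in its fixed point. *)

theory Defs
  imports Main
begin

definition morph_ext :: "('a \<Rightarrow> 'a list) \<Rightarrow> 'a list \<Rightarrow> 'a list" where
  "morph_ext \<sigma> w = concat (map \<sigma> w)"

definition is_morphism_on :: "'a set \<Rightarrow> ('a \<Rightarrow> 'a list) \<Rightarrow> bool" where
  "is_morphism_on C \<sigma> \<longleftrightarrow> (\<forall>c\<in>C. set (\<sigma> c) \<subseteq> C)"

definition uniform_on :: "nat \<Rightarrow> 'a set \<Rightarrow> ('a \<Rightarrow> 'a list) \<Rightarrow> bool" where
  "uniform_on k C \<sigma> \<longleftrightarrow> (\<forall>c\<in>C. length (\<sigma> c) = k)"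

definition nonuniform_on :: "'a set \<Rightarrow> ('a \<Rightarrow> 'a list) \<Rightarrow> bool" where
  "nonuniform_on C \<sigma> \<longleftrightarrow> \<not> (\<exists>k. uniform_on k C \<sigma>)"

definition words_converge_to :: "(nat \<Rightarrow> 'a list) \<Rightarrow> (nat \<Rightarrow> 'a) \<Rightarrow> bool" where
  "words_converge_to w b \<longleftrightarrow>
     (\<forall>N. \<exists>L. \<forall>l\<ge>L. N \<le> length (w l) \<and> (\<forall>i<N. w l ! i = b i))"

definition iter_fixed_point :: "'a set \<Rightarrow> ('a \<Rightarrow> 'a list) \<Rightarrow> (nat \<Rightarrow> 'a) \<Rightarrow> bool" where
  "iter_fixed_point C \<sigma> b \<longleftrightarrow>
     is_morphism_on C \<sigma> \<and> (\<forall>n. b n \<in> C) \<and>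
     (\<exists>x. \<sigma> (b 0) = b 0 # x \<and> (\<forall>l. (morph_ext \<sigma> ^^ l) x \<noteq> [])) \<and>
     words_converge_to (\<lambda>l. (morph_ext \<sigma> ^^ l) [b 0]) b"

text \<open>k-automatic: image under a letter-to-letter map of the iterative fixed point of a
  k-uniform morphism over some finite alphabet (alphabets are encoded as finite sets of
  naturals, which is no loss of generality).\<close>
definition k_automatic :: "nat \<Rightarrow> (nat \<Rightarrow> 'b) \<Rightarrow> bool" where
  "k_automatic k a \<longleftrightarrow>
     (\<exists>(C::nat set) \<sigma> b (\<tau>::nat \<Rightarrow> 'b). finite C \<and> uniform_on k C \<sigma> \<and>
        iter_fixed_point C \<sigma> b \<and> (\<forall>n. a n = \<tau> (b n)))"

definition automatic :: "(nat \<Rightarrow> 'b) \<Rightarrow> bool" where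
  "automatic a \<longleftrightarrow> (\<exists>k\<ge>2. k_automatic k a)"

definition nonuniformly_morphic :: "(nat \<Rightarrow> 'b) \<Rightarrow> bool" where
  "nonuniformly_morphic a \<longleftrightarrow>
     (\<exists>(C::nat set) \<sigma> b (\<tau>::nat \<Rightarrow> 'b). finite C \<and> C = range b \<and> nonuniform_on C \<sigma> \<and>
        iter_fixed_point C \<sigma> b \<and> (\<forall>n. a n = \<tau> (b n)))"

end

theory Submission
  imports Defs
begin

lemma morph_append[simp]: "morph_ext \<sigma> (u @ v) = morph_ext \<sigma> u @ morph_ext \<sigma> v"
  by (simp add: morph_ext_def)

lemma morph_Cons[simp]: "morph_ext \<sigma> (c # v) = \<sigma> c @ morph_ext \<sigma> v"
  by (simp add: morph_ext_def)

lemma morph_Nil[simp]: "morph_ext \<sigma> [] = []"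
  by (simp add: morph_ext_def)

lemma morph_pow_append: "(morph_ext \<sigma> ^^ l) (u @ v) = (morph_ext \<sigma> ^^ l) u @ (morph_ext \<sigma> ^^ l) v"
  by (induction l) auto

lemma morph_len: "uniform_on k C \<sigma> \<Longrightarrow> set w \<subseteq> C \<Longrightarrow> length (morph_ext \<sigma> w) = k * length w"
  by (induction w) (auto simp: uniform_on_def)

lemma morph_set: "is_morphism_on C \<sigma> \<Longrightarrow> set w \<subseteq> C \<Longrightarrow> set (morph_ext \<sigma> w) \<subseteq> C"
  by (induction w) (auto simp: is_morphism_on_def)

lemma morph_pow_set: "is_morphism_on C \<sigma> \<Longrightarrow> set w \<subseteq> C \<Longrightarrow> set ((morph_ext \<sigma> ^^ l) w) \<subseteq> C"
  by (induction l) (auto dest: morph_set)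

lemma morph_pow_len: "uniform_on k C \<sigma> \<Longrightarrow> is_morphism_on C \<sigma> \<Longrightarrow> set w \<subseteq> C \<Longrightarrow>
   length ((morph_ext \<sigma> ^^ l) w) = k ^ l * length w"
proof (induction l)
  case (Suc l)
  have "set ((morph_ext \<sigma> ^^ l) w) \<subseteq> C" using morph_pow_set Suc.prems by blast
  then show ?case using Suc by (simp add: morph_len)
qed simp

lemma fp_prop:
  assumes U: "uniform_on k C \<sigma>" and F: "iter_fixed_point C \<sigma> b"
  shows "k \<ge> 2 \<and> (\<forall>n. \<sigma> (b n) = map b [k*n..<k*n+k])"
proof -
  have M: "is_morphism_on C \<sigma>" and BC: "\<And>n. b n \<in> C"
    and conv: "words_converge_to (\<lambda>l. (morph_ext \<sigma> ^^ l) [b 0]) b"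
    using F by (auto simp: iter_fixed_point_def)
  obtain x where x: "\<sigma> (b 0) = b 0 # x" and xne: "\<forall>l. (morph_ext \<sigma> ^^ l) x \<noteq> []"
    using F by (auto simp: iter_fixed_point_def)
  have "x \<noteq> []" using xne[rule_format, of 0] by simp
  then have "length (\<sigma> (b 0)) \<ge> 2" using x by (cases x) auto
  moreover have "length (\<sigma> (b 0)) = k" using U BC by (auto simp: uniform_on_def)
  ultimately have k2: "k \<ge> 2" by simp
  define W where "W l = (morph_ext \<sigma> ^^ l) [b 0]" for l
  have WS: "W (Suc l) = W l @ (morph_ext \<sigma> ^^ l) x" for l
  proof -
    have "W (Suc l) = (morph_ext \<sigma> ^^ l) (morph_ext \<sigma> [b 0])"
      unfolding W_def by (simp add: funpow_Suc_right del: funpow.simps)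
    also have "morph_ext \<sigma> [b 0] = [b 0] @ x" using x by simp
    finally show ?thesis using morph_pow_append[where \<sigma>=\<sigma> and l=l and u="[b 0]" and v=x] unfolding W_def by simp
  qed
  have pref: "m \<ge> l \<Longrightarrow> \<exists>r. W m = W l @ r" for m l
  proof (induction m rule: dec_induct)
    case base then show ?case by auto
  next
    case (step m) then show ?case using WS by auto
  qed
  have lenW: "length (W l) = k ^ l" for l
    unfolding W_def using morph_pow_len[OF U M, of "[b 0]" l] BC by simp
  have Wpre: "W l = map b [0..<k^l]" for l
  proof (rule nth_equalityI)
    show "length (W l) = length (map b [0..<k^l])" using lenW by simp
    fix i assume i: "i < length (W l)"
    obtain L where L: "\<forall>l'\<ge>L. k^l \<le> length (W l') \<and> (\<forall>i<k^l. W l' ! i = b i)"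
      using conv unfolding words_converge_to_def W_def by blast
    obtain r where r: "W (max L l) = W l @ r" using pref[of l "max L l"] by auto
    have "W l ! i = W (max L l) ! i" using r i by (simp add: nth_append)
    also have "\<dots> = b i" using L i lenW by auto
    finally show "W l ! i = map b [0..<k^l] ! i" using i lenW by simp
  qed
  have pre: "morph_ext \<sigma> (map b [0..<n]) = map b [0..<k*n]" for n
  proof -
    have "n < 2^n" by (rule less_exp)
    also have "(2::nat)^n \<le> k^n" using k2 by (simp add: power_mono)
    finally have nl: "n \<le> k^n" by simp
    have "map b [0..<k^n] = map b [0..<n] @ map b [n..<k^n]"
      using upt_add_eq_append[of 0 n "k^n - n"] nl by simp
    then have "morph_ext \<sigma> (map b [0..<k^n]) = morph_ext \<sigma> (map b [0..<n]) @ morph_ext \<sigma> (map b [n..<k^n])"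
      by simp
    moreover have "morph_ext \<sigma> (map b [0..<k^n]) = map b [0..<k^Suc n]"
      using Wpre[of n] Wpre[of "Suc n"] unfolding W_def by simp
    moreover have "length (morph_ext \<sigma> (map b [0..<n])) = k * n"
      using morph_len[OF U, of "map b [0..<n]"] BC by auto
    moreover have "k * n \<le> k ^ Suc n" using nl by simp
    ultimately have "morph_ext \<sigma> (map b [0..<n]) = take (k*n) (map b [0..<k^Suc n])"
      by (metis append_eq_conv_conj)
    also have "\<dots> = map b [0..<k*n]" using \<open>k * n \<le> k ^ Suc n\<close> by (simp add: take_map)
    finally show ?thesis .
  qed
  have "\<sigma> (b n) = map b [k*n..<k*n+k]" for n
  proof -
    have "morph_ext \<sigma> (map b [0..<Suc n]) = map b [0..<k*n] @ \<sigma> (b n)"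
      using pre[of n] by simp
    moreover have "map b [0..<k * Suc n] = map b [0..<k*n] @ map b [k*n..<k*n+k]"
      using upt_add_eq_append[of 0 "k*n" k] by (simp add: add.commute)
    ultimately show ?thesis using pre[of "Suc n"] by simp
  qed
  then show ?thesis using k2 by simp
qed


lemma iter_nonempty:
  assumes "\<forall>c\<in>D. \<sigma> c \<noteq> []" "is_morphism_on D \<sigma>"
  shows "set w \<subseteq> D \<Longrightarrow> w \<noteq> [] \<Longrightarrow> (morph_ext \<sigma> ^^ l) w \<noteq> [] \<and> set ((morph_ext \<sigma> ^^ l) w) \<subseteq> D"
proof (induction l)
  case (Suc l)
  then obtain c v where cv: "(morph_ext \<sigma> ^^ l) w = c # v" "c \<in> D" "set v \<subseteq> D"
    by (metis list.exhaust list.set_intros(1) set_subset_Cons subset_code(1) subset_trans)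
  have "morph_ext \<sigma> (c # v) \<noteq> []" using assms(1) cv by simp
  moreover have "set (morph_ext \<sigma> (c # v)) \<subseteq> D" using morph_set[OF assms(2)] cv
    by (metis empty_subsetI insert_subset list.set(2))
  ultimately show ?case using cv by simp
qed simp

lemma G:
  fixes C :: "'c set" and b :: "nat \<Rightarrow> 'c"
  assumes fin: "finite C" and U: "uniform_on k C \<sigma>" and F: "iter_fixed_point C \<sigma> b" and p1: "p \<ge> 1"
  shows "\<exists>(e::'c\<Rightarrow>nat) M \<phi> (b'::nat\<Rightarrow>nat). inj_on e C \<and> (\<forall>c\<in>C. e c < M) \<and>
     (\<forall>n. b' n = (if n \<le> p then M + n else e (b n))) \<and>
     nonuniform_on (range b') \<phi> \<and> iter_fixed_point (range b') \<phi> b'"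
proof -
  obtain e M where eM: "e ` C = {i::nat. i < M}" and inj: "inj_on e C"
    using finite_imp_inj_to_nat_seg[OF fin] by blast
  have eless: "\<forall>c\<in>C. e c < M" using eM by auto
  have BC: "\<And>n. b n \<in> C" using F by (auto simp: iter_fixed_point_def)
  have k2: "k \<ge> 2" and sb: "\<And>n. \<sigma> (b n) = map b [k*n..<k*n+k]" using fp_prop[OF U F] by auto
  define b' where "b' n = (if n \<le> p then M + n else e (b n))" for n
  define S where "S n = (if n = 0 then 0 else if n \<le> p then k*n+1 else k*n)" for n
  define \<phi> where "\<phi> c = (if M \<le> c \<and> c \<le> M + p then map b' [S (c-M)..<S (Suc (c-M))]
       else map e (\<sigma> (inv_into C e c)))" for c
  have Smono: "S n < S (Suc n)" for n
    using k2 p1 by (auto simp: S_def algebra_simps)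
  have Sge: "n \<ge> 1 \<Longrightarrow> S n \<ge> n + 1" for n
  proof -
    assume "n \<ge> 1"
    then have "k * n \<ge> 2 * n" using k2 by simp
    then have "k * n \<ge> n + 1" using \<open>n \<ge> 1\<close> by linarith
    then show ?thesis using \<open>n \<ge> 1\<close> k2 by (simp add: S_def)
  qed
  have block: "\<phi> (b' n) = map b' [S n..<S (Suc n)]" for n
  proof (cases "n \<le> p")
    case True
    then show ?thesis by (simp add: \<phi>_def b'_def)
  next
    case False
    have bl: "b' n = e (b n)" "e (b n) < M" using False eless BC by (auto simp: b'_def)
    then have "\<phi> (b' n) = map e (\<sigma> (b n))" using inj BC by (simp add: \<phi>_def)
    also have "\<dots> = map (e \<circ> b) [k*n..<k*n+k]" using sb by simp
    also have "\<dots> = map b' [k*n..<k*n+k]"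
    proof (rule map_cong[OF refl])
      fix i assume "i \<in> set [k*n..<k*n+k]"
      then have "i \<ge> k * n" by simp
      moreover have "k * n \<ge> 2 * n" using k2 by simp
      ultimately have "i > p" using False by linarith
      then show "(e \<circ> b) i = b' i" by (simp add: b'_def)
    qed
    finally show ?thesis using False by (simp add: S_def algebra_simps)
  qed
  have preS: "morph_ext \<phi> (map b' [0..<n]) = map b' [0..<S n]" for n
  proof (induction n)
    case 0 then show ?case by (simp add: S_def)
  next
    case (Suc n)
    have "[0..<S (Suc n)] = [0..<S n] @ [S n..<S (Suc n)]"
      using upt_add_eq_append[of 0 "S n" "S (Suc n) - S n"] Smono[of n] by simp
    then show ?case using Suc block[of n] by simp
  qed
  have Wl: "(morph_ext \<phi> ^^ l) [b' 0] = map b' [0..<(S ^^ l) 1]" for l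
  proof (induction l)
    case 0 then show ?case by simp
  next
    case (Suc l) then show ?case using preS by simp
  qed
  have Sl: "(S ^^ l) 1 \<ge> l + 1" for l
  proof (induction l)
    case (Suc l) then show ?case using Sge[of "(S ^^ l) 1"] by simp
  qed simp
  let ?B = "range b'"
  have mor: "is_morphism_on ?B \<phi>" unfolding is_morphism_on_def using block by auto
  have ne: "\<forall>c\<in>?B. \<phi> c \<noteq> []"
  proof
    fix c assume "c \<in> ?B"
    then obtain n where "c = b' n" by blast
    then show "\<phi> c \<noteq> []" using block[of n] Smono[of n] by simp
  qed
  have S1: "S 1 = k + 1" using p1 by (simp add: S_def)
  have x: "\<phi> (b' 0) = b' 0 # map b' [1..<k+1]"
    using block[of 0] S1 by (simp add: S_def upt_rec)
  have xne: "\<forall>l. (morph_ext \<phi> ^^ l) (map b' [1..<k+1]) \<noteq> []"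
    using iter_nonempty[OF ne mor, of "map b' [1..<k+1]"] k2 by auto
  have conv: "words_converge_to (\<lambda>l. (morph_ext \<phi> ^^ l) [b' 0]) b'"
    unfolding words_converge_to_def
  proof
    fix N
    show "\<exists>L. \<forall>l\<ge>L. N \<le> length ((morph_ext \<phi> ^^ l) [b' 0]) \<and> (\<forall>i<N. (morph_ext \<phi> ^^ l) [b' 0] ! i = b' i)"
    proof (intro exI allI impI)
      fix l assume "l \<ge> N"
      then have "N < (S ^^ l) 1" using Sl[of l] by simp
      then show "N \<le> length ((morph_ext \<phi> ^^ l) [b' 0]) \<and> (\<forall>i<N. (morph_ext \<phi> ^^ l) [b' 0] ! i = b' i)"
        unfolding Wl by auto
    qed
  qed
  have ifp: "iter_fixed_point ?B \<phi> b'"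
    unfolding iter_fixed_point_def using mor x xne conv by blast
  have nu: "nonuniform_on ?B \<phi>"
    unfolding nonuniform_on_def uniform_on_def
  proof
    assume "\<exists>j. \<forall>c\<in>?B. length (\<phi> c) = j"
    then obtain j where j: "\<forall>c\<in>?B. length (\<phi> c) = j" by blast
    have "length (\<phi> (b' 0)) = k + 1" using block[of 0] S1 by (simp add: S_def)
    moreover have "length (\<phi> (b' p)) = k - 1" using block[of p] p1 k2
      by (simp add: S_def algebra_simps)
    ultimately show False using j k2 by force
  qed
  show ?thesis
    apply (rule exI[of _ e], rule exI[of _ M], rule exI[of _ \<phi>], rule exI[of _ b'])
    using inj eless nu ifp by (simp add: b'_def)
qed


lemma exists_p:
  fixes a :: "nat \<Rightarrow> 'a"
  assumes fin: "finite A" and aA: "\<forall>n. a n \<in> A"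
  shows "\<exists>p\<ge>1. p + card (a ` {p<..}) = 1 + card A"
proof -
  define f where "f p = p + card (a ` {p<..})" for p
  define t where "t = 1 + card A"
  have sub: "a ` {p<..} \<subseteq> A" for p using aA by auto
  have f1: "f 1 \<le> t" unfolding f_def t_def using card_mono[OF fin sub] by simp
  have fstep: "f (Suc q) \<le> f q + 1" for q
  proof -
    have "a ` {Suc q<..} \<subseteq> a ` {q<..}" by auto
    then have "card (a ` {Suc q<..}) \<le> card (a ` {q<..})"
      by (rule card_mono[OF finite_subset[OF sub fin]])
    then show ?thesis by (simp add: f_def)
  qed
  have ex: "\<exists>p. p \<ge> 1 \<and> f p \<ge> t" by (rule exI[of _ "max 1 t"]) (simp add: f_def)
  define p where "p = (LEAST p. p \<ge> 1 \<and> f p \<ge> t)"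
  have pp: "p \<ge> 1 \<and> f p \<ge> t" unfolding p_def by (rule LeastI_ex[OF ex])
  show ?thesis
  proof (cases "p = 1")
    case True then show ?thesis using pp f1 by (auto simp: f_def t_def)
  next
    case False
    then obtain q where q: "p = Suc q" "q \<ge> 1" using pp by (cases p) auto
    have "\<not> (q \<ge> 1 \<and> f q \<ge> t)"
    proof
      assume "q \<ge> 1 \<and> f q \<ge> t"
      then have "p \<le> q" unfolding p_def by (rule Least_le)
      then show False using q by simp
    qed
    then have "f q < t" using q by simp
    then have "f p = t" using fstep[of q] pp q by simp
    then show ?thesis using pp by (auto simp: f_def t_def)
  qed
qed

theorem mainTheorem2:
  fixes a :: "nat \<Rightarrow> 'a" and A :: "'a set"
  assumes "finite A" and "\<forall>n. a n \<in> A" and "automatic a"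
  shows "nonuniformly_morphic a \<and>
    ((\<exists>k \<sigma>. uniform_on k A \<sigma> \<and> iter_fixed_point A \<sigma> a) \<longrightarrow>
      (\<exists>(B::nat set) (a'::nat \<Rightarrow> nat) \<phi> (\<tau>::nat \<Rightarrow> 'a).
         card B = 2 + card A \<and> B = range a' \<and> nonuniform_on B \<phi> \<and>
         iter_fixed_point B \<phi> a' \<and> (\<forall>n. a n = \<tau> (a' n))))"
proof
  show "nonuniformly_morphic a"
  proof -
    obtain k and C :: "nat set" and \<sigma> b and \<tau> :: "nat \<Rightarrow> 'a" where
      fin: "finite C" and U: "uniform_on k C \<sigma>" and F: "iter_fixed_point C \<sigma> b"
      and ab: "\<forall>n. a n = \<tau> (b n)"
      using assms(3) unfolding automatic_def k_automatic_def by blast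
    obtain e M \<phi> and b' :: "nat \<Rightarrow> nat" where inj: "inj_on e C" and el: "\<forall>c\<in>C. e c < M"
      and b': "\<forall>n. b' n = (if n \<le> 1 then M + n else e (b n))"
      and nu: "nonuniform_on (range b') \<phi>" and ifp: "iter_fixed_point (range b') \<phi> b'"
      using G[OF fin U F, of 1] by auto
    have BC: "\<And>n. b n \<in> C" using F by (auto simp: iter_fixed_point_def)
    have "range b' \<subseteq> {M, M+1} \<union> e ` C" using b' BC by (auto split: if_splits)
    then have finB: "finite (range b')" using fin by (meson finite.emptyI finite.insertI finite_UnI finite_imageI finite_subset)
    define \<tau>' where "\<tau>' c = (if M \<le> c then \<tau> (b (c - M)) else \<tau> (inv_into C e c))" for c
    have "\<forall>n. a n = \<tau>' (b' n)"
    proof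
      fix n show "a n = \<tau>' (b' n)"
        using b'[rule_format, of n] ab el[rule_format, OF BC[of n]] BC inj by (auto simp: \<tau>'_def)
    qed
    then show ?thesis unfolding nonuniformly_morphic_def using finB nu ifp by blast
  qed
next
  show "(\<exists>k \<sigma>. uniform_on k A \<sigma> \<and> iter_fixed_point A \<sigma> a) \<longrightarrow>
      (\<exists>(B::nat set) (a'::nat \<Rightarrow> nat) \<phi> (\<tau>::nat \<Rightarrow> 'a).
         card B = 2 + card A \<and> B = range a' \<and> nonuniform_on B \<phi> \<and>
         iter_fixed_point B \<phi> a' \<and> (\<forall>n. a n = \<tau> (a' n)))"
  proof
    assume "\<exists>k \<sigma>. uniform_on k A \<sigma> \<and> iter_fixed_point A \<sigma> a"
    then obtain k \<sigma> where U: "uniform_on k A \<sigma>" and F: "iter_fixed_point A \<sigma> a" by blast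
    obtain p where p1: "p \<ge> 1" and pc: "p + card (a ` {p<..}) = 1 + card A"
      using exists_p[OF assms(1,2)] by blast
    obtain e M \<phi> and b' :: "nat \<Rightarrow> nat" where inj: "inj_on e A" and el: "\<forall>c\<in>A. e c < M"
      and b': "\<forall>n. b' n = (if n \<le> p then M + n else e (a n))"
      and nu: "nonuniform_on (range b') \<phi>" and ifp: "iter_fixed_point (range b') \<phi> b'"
      using G[OF assms(1) U F p1] by auto
    have aA: "\<And>n. a n \<in> A" using assms(2) by auto
    have sub: "a ` {p<..} \<subseteq> A" using aA by auto
    have R: "range b' = (\<lambda>n. M + n) ` {..p} \<union> e ` a ` {p<..}"
    proof
      show "range b' \<subseteq> (\<lambda>n. M + n) ` {..p} \<union> e ` a ` {p<..}"
        using b' by (auto split: if_splits)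
    next
      show "(\<lambda>n. M + n) ` {..p} \<union> e ` a ` {p<..} \<subseteq> range b'"
      proof
        fix y assume "y \<in> (\<lambda>n. M + n) ` {..p} \<union> e ` a ` {p<..}"
        then show "y \<in> range b'"
        proof
          assume "y \<in> (\<lambda>n. M + n) ` {..p}"
          then obtain n where "n \<le> p" "y = M + n" by auto
          then have "y = b' n" using b' by simp
          then show ?thesis by simp
        next
          assume "y \<in> e ` a ` {p<..}"
          then obtain n where "n > p" "y = e (a n)" by auto
          then have "y = b' n" using b' by simp
          then show ?thesis by simp
        qed
      qed
    qed
    have disj: "(\<lambda>n. M + n) ` {..p} \<inter> e ` a ` {p<..} = {}"
    proof (rule ccontr)
      assume "(\<lambda>n. M + n) ` {..p} \<inter> e ` a ` {p<..} \<noteq> {}"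
      then obtain n m where "M + n = e (a m)" by blast
      moreover have "e (a m) < M" using el aA by blast
      ultimately show False by simp
    qed
    have fin2: "finite (e ` a ` {p<..})" using finite_subset[OF sub assms(1)] by simp
    have c1: "card ((\<lambda>n. M + n) ` {..p}) = p + 1" by (simp add: card_image)
    have c2: "card (e ` a ` {p<..}) = card (a ` {p<..})"
      using card_image[OF inj_on_subset[OF inj sub]] .
    have cardB: "card (range b') = 2 + card A"
      unfolding R using card_Un_disjoint[OF _ fin2 disj] c1 c2 pc by simp
    define \<tau>' where "\<tau>' c = (if M \<le> c then a (c - M) else inv_into A e c)" for c
    have "\<forall>n. a n = \<tau>' (b' n)"
    proof
      fix n show "a n = \<tau>' (b' n)"
        using b'[rule_format, of n] el[rule_format, OF aA[of n]] aA inj by (auto simp: \<tau>'_def)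
    qed
    then show "\<exists>(B::nat set) (a'::nat \<Rightarrow> nat) \<phi> (\<tau>::nat \<Rightarrow> 'a).
         card B = 2 + card A \<and> B = range a' \<and> nonuniform_on B \<phi> \<and>
         iter_fixed_point B \<phi> a' \<and> (\<forall>n. a n = \<tau> (a' n))"
      using cardB nu ifp by blast
  qed
qed

end
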